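(* Let $V\in\mathcal{V}$ and $\epsilon,c,c_1,c_2\in(0,\mathcal{L}_V(0))$. (1) $\mathcal{L}_V(\tau_V(c))\ge c/(1+c)$, and for all $s>0$, \[\mathcal{L}_V(\tau_V(c)+s)\le c+\frac{\tau_V(c)+s}{s\,e^{s\lambda_V(c)}}.\] (2) $\mathcal{L}_V(T_V(\epsilon))=\epsilon$, and for all $r\ge0$, $s>0$ and $c_1<c_2$, \[\mathcal{L}_V(T_V(\epsilon)+r+s)\le c_1+c_2e^{-(T_V(\epsilon)+r+s)\lambda_V(c_1)}+\frac{\epsilon\,(T_V(\epsilon)+r+s)}{(T_V(\epsilon)+s)e^{r\lambda_V(c_2)}}.\]
   Context: $\mathcal{V}$ is the class of non-decreasing right-continuous $V:(0,\infty)\to\mathbb{R}$ with $\lim_{\lambda\to0^+}V(\lambda)=0$, $\lim_{\lambda\to\infty}V(\lambda)<\infty$; $\mathcal{L}_V(t)=\int_{(0,\infty)}e^{-t\lambda}dV(\lambda)$ for $t\ge0$. $T_V(\epsilon)=\min\{t\ge0:\mathcal{L}_V(t)\le\epsilon\}$. For $c\in(0,\mathcal{L}_V(0))$: $\lambda_V(c)=\inf\{\lambda:V(\lambda)>c\}$, $\tau_V(c)=\sup_{\lambda\ge\lambda_V(c)}\lambda^{-1}\log(1+V(\lambda))$. *)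

theory Defs
  imports "HOL-Probability.Probability"
begin

definition Vclass :: "(real \<Rightarrow> real) \<Rightarrow> bool" where
  "Vclass V \<longleftrightarrow> mono_on {0<..} V
     \<and> (\<forall>x>0. continuous (at_right x) V)
     \<and> (V \<longlongrightarrow> 0) (at_right 0)
     \<and> (\<exists>L. (V \<longlongrightarrow> L) at_top)"

text \<open>Extension of V by 0 to (-inf,0], so that it is the distribution function
  of the Lebesgue-Stieltjes measure dV on the real line (carried by (0,inf)).\<close>
definition Vext :: "(real \<Rightarrow> real) \<Rightarrow> real \<Rightarrow> real" where
  "Vext V x = (if x \<le> 0 then 0 else V x)"

definition LV :: "(real \<Rightarrow> real) \<Rightarrow> real \<Rightarrow> real" where
  "LV V t = (LINT l:{0<..}|interval_measure (Vext V). exp (- t * l))"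

definition TV :: "(real \<Rightarrow> real) \<Rightarrow> real \<Rightarrow> real" where
  "TV V \<epsilon> = (LEAST t. t \<ge> 0 \<and> LV V t \<le> \<epsilon>)"

definition lamV :: "(real \<Rightarrow> real) \<Rightarrow> real \<Rightarrow> real" where
  "lamV V c = Inf {l. l > 0 \<and> V l > c}"

definition tauV :: "(real \<Rightarrow> real) \<Rightarrow> real \<Rightarrow> real" where
  "tauV V c = (SUP l \<in> {l. l > 0 \<and> l \<ge> lamV V c}. ln (1 + V l) / l)"

end

theory Submission imports Defs "HOL-Real_Asymp.Real_Asymp" begin

context fixes V :: "real \<Rightarrow> real" assumes VC: "Vclass V"
begin

lemma V_mono: "0 < x \<Longrightarrow> x \<le> y \<Longrightarrow> V x \<le> V y"
  using VC unfolding Vclass_def mono_on_def by auto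

lemma V_nonneg: assumes "0 < x" shows "0 \<le> V x"
proof -
  have lim: "(V \<longlongrightarrow> 0) (at_right 0)" using VC unfolding Vclass_def by auto
  have "\<forall>\<^sub>F y in at_right 0. V y \<le> V x"
    unfolding eventually_at_right_field using assms by (intro exI[of _ x]) (auto intro: V_mono)
  from tendsto_upperbound[OF lim this] show ?thesis by simp
qed

definition "LimV = (THE L. (V \<longlongrightarrow> L) at_top)"

lemma V_lim: "(V \<longlongrightarrow> LimV) at_top"
proof -
  obtain L where "(V \<longlongrightarrow> L) at_top" using VC unfolding Vclass_def by auto
  then show ?thesis unfolding LimV_def using tendsto_unique[OF trivial_limit_at_top_linorder]
    by (metis (mono_tags) theI)
qed

lemma V_le_Lim: assumes "0 < x" shows "V x \<le> LimV"
proof -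
  have "\<forall>\<^sub>F y in at_top. V x \<le> V y"
    unfolding eventually_at_top_linorder using assms by (intro exI[of _ x]) (auto intro: V_mono)
  from tendsto_lowerbound[OF V_lim this] show ?thesis by simp
qed

abbreviation "F \<equiv> Vext V"

lemma F_mono: "x \<le> y \<Longrightarrow> F x \<le> F y"
  unfolding Vext_def using V_mono V_nonneg by auto

lemma F_rcont: "continuous (at_right a) F"
proof -
  have rc: "\<forall>x>0. continuous (at_right x) V" using VC unfolding Vclass_def by auto
  have lim0: "(V \<longlongrightarrow> 0) (at_right 0)" using VC unfolding Vclass_def by auto
  show ?thesis
  proof (cases "a > 0")
    case True
    have ev: "\<forall>\<^sub>F y in at_right a. F y = V y"
      unfolding eventually_at_right_field using True by (intro exI[of _ "a+1"]) (auto simp: Vext_def)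
    have "(V \<longlongrightarrow> V a) (at_right a)" using rc True by (simp add: continuous_within)
    then have "(F \<longlongrightarrow> V a) (at_right a)" using tendsto_cong[OF ev] by simp
    then show ?thesis using True by (simp add: continuous_within Vext_def)
  next
    case False
    show ?thesis
    proof (cases "a = 0")
      case True
      have ev: "\<forall>\<^sub>F y in at_right a. F y = V y"
        unfolding eventually_at_right_field using True by (intro exI[of _ "a+1"]) (auto simp: Vext_def)
      then have "(F \<longlongrightarrow> 0) (at_right a)" using tendsto_cong[OF ev] lim0 True by simp
      then show ?thesis using True by (simp add: continuous_within Vext_def)
    next
      case False
      with \<open>\<not> a > 0\<close> have "a < 0" by simp
      have ev: "\<forall>\<^sub>F y in at_right a. F y = 0"
        unfolding eventually_at_right_field using \<open>a<0\<close> by (intro exI[of _ 0]) (auto simp: Vext_def)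
      then have "(F \<longlongrightarrow> 0) (at_right a)" using tendsto_cong[OF ev] by simp
      then show ?thesis using \<open>a<0\<close> by (simp add: continuous_within Vext_def)
    qed
  qed
qed

lemma F_bot: "(F \<longlongrightarrow> 0) at_bot"
proof -
  have ev: "\<forall>\<^sub>F y in at_bot. F y = 0"
    unfolding eventually_at_bot_linorder by (intro exI[of _ 0]) (auto simp: Vext_def)
  show ?thesis using tendsto_cong[OF ev] by simp
qed

lemma F_top: "(F \<longlongrightarrow> LimV) at_top"
proof -
  have ev: "\<forall>\<^sub>F y in at_top. F y = V y"
    unfolding eventually_at_top_linorder by (intro exI[of _ 1]) (auto simp: Vext_def)
  show ?thesis using tendsto_cong[OF ev] V_lim by simp
qed

lemma LimV_nonneg: "0 \<le> LimV"
  using V_nonneg[of 1] V_le_Lim[of 1] by simp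

abbreviation "M \<equiv> interval_measure F"

lemma M_finite: "finite_measure M"
  using finite_borel_measure_interval_measure[OF F_mono F_rcont F_bot F_top LimV_nonneg]
  by (simp add: finite_borel_measure_def)

lemma M_UNIV: "emeasure M UNIV = LimV"
  using interval_measure_UNIV[OF F_mono F_rcont F_bot F_top LimV_nonneg] .

lemma M_Iic: "measure M {..x} = F x" "emeasure M {..x} = F x"
  using measure_interval_measure_Iic[OF F_mono F_rcont F_bot] emeasure_interval_measure_Iic[OF F_mono F_rcont F_bot]
  by auto

lemma M_Ioc: "a \<le> b \<Longrightarrow> measure M {a<..b} = F b - F a"
  using measure_interval_measure_Ioc[OF _ F_mono F_rcont] by auto


lemma M_le0: "emeasure M {..0} = 0"
  using M_Iic(2)[of 0] by (simp add: Vext_def)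

lemma int_bound:
  fixes g :: "real \<Rightarrow> real" and B :: real
  assumes "A \<in> sets borel" "g \<in> borel_measurable borel" "\<And>x. x \<in> A \<Longrightarrow> \<bar>g x\<bar> \<le> B"
  shows "integrable M (\<lambda>x. indicator A x * g x)"
proof -
  interpret finite_measure M by (rule M_finite)
  show ?thesis
  proof (rule integrable_const_bound[where B="\<bar>B\<bar>"])
    show "AE x in M. norm (indicator A x * g x) \<le> \<bar>B\<bar>"
      using assms(3) by (intro AE_I2) (auto simp: indicator_def intro: order_trans[OF _ abs_ge_self])
    show "(\<lambda>x. indicator A x * g x) \<in> borel_measurable M"
      using assms(1,2) by measurable
  qed
qed

lemma int_exp:
  assumes "A \<in> sets borel" "A \<subseteq> {0..}" "0 \<le> t"
  shows "integrable M (\<lambda>x. indicator A x * exp (- t * x))"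
  by (rule int_bound[where B=1]) (use assms in auto)

lemma LV_eq: "LV V t = (\<integral>l. indicator {0<..} l * exp (- t * l) \<partial>M)"
  unfolding LV_def set_lebesgue_integral_def by simp

lemma LV_split:
  assumes "0 < a" "0 \<le> t"
  shows "LV V t = (\<integral>l. indicator {0<..<a} l * exp (- t * l) \<partial>M) + (\<integral>l. indicator {a..} l * exp (- t * l) \<partial>M)"
proof -
  have "LV V t = (\<integral>l. indicator {0<..<a} l * exp (- t * l) + indicator {a..} l * exp (- t * l) \<partial>M)"
    unfolding LV_eq using assms by (intro Bochner_Integration.integral_cong) (auto simp: indicator_def)
  also have "\<dots> = (\<integral>l. indicator {0<..<a} l * exp (- t * l) \<partial>M) + (\<integral>l. indicator {a..} l * exp (- t * l) \<partial>M)"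
    using assms by (intro Bochner_Integration.integral_add int_exp) auto
  finally show ?thesis .
qed

lemma meas_Ioo_le:
  assumes "0 < a" "\<And>l. 0 < l \<Longrightarrow> l < a \<Longrightarrow> V l \<le> c"
  shows "measure M {0<..<a} \<le> c"
proof -
  interpret finite_measure M by (rule M_finite)
  have c0: "0 \<le> c" using assms(2)[of "a/2"] V_nonneg[of "a/2"] assms(1) by simp
  define A where "A n = {0<..a - a / real (Suc (Suc n))}" for n
  have inc: "incseq A" unfolding incseq_def
  proof (intro allI impI)
    fix m n :: nat assume "m \<le> n"
    then have "a / real (Suc (Suc n)) \<le> a / real (Suc (Suc m))"
      using assms(1) by (intro divide_left_mono) auto
    then show "A m \<subseteq> A n" unfolding A_def by auto
  qed
  have U: "(\<Union>n. A n) = {0<..<a}"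
  proof (intro antisym subsetI)
    fix x assume "x \<in> (\<Union>n. A n)"
    then obtain n where "x \<in> A n" by auto
    moreover have "a / real (Suc (Suc n)) > 0" using assms(1) by simp
    ultimately show "x \<in> {0<..<a}" unfolding A_def by auto
  next
    fix x assume x: "x \<in> {0<..<a}"
    then have "a - x > 0" by simp
    obtain n where n: "a / (a - x) < real n" using reals_Archimedean2 by blast
    have "a / real (Suc (Suc n)) < a - x"
      using n x \<open>a - x > 0\<close> assms(1) by (auto simp: field_simps)
    then have "x \<in> A n" using x unfolding A_def by auto
    then show "x \<in> (\<Union>n. A n)" by blast
  qed
  have "\<And>n. emeasure M (A n) \<le> c"
  proof -
    fix n
    let ?b = "a - a / real (Suc (Suc n))"
    show "emeasure M (A n) \<le> c"
    proof (cases "0 \<le> ?b")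
      case True
      have "emeasure M (A n) = F ?b - F 0"
        unfolding A_def by (rule emeasure_interval_measure_Ioc[OF True F_mono F_rcont])
      also have "\<dots> \<le> c"
      proof (cases "?b = 0")
        case True
        show ?thesis using True c0 by (simp add: Vext_def)
      next
        case False
        have "a / real (Suc (Suc n)) > 0" using assms(1) by simp
        then have "V ?b \<le> c" using False True by (intro assms(2)) auto
        then show ?thesis using False True by (simp add: Vext_def ennreal_leI)
      qed
      finally show ?thesis .
    next
      case False then have "A n = {}" unfolding A_def by auto
      then show ?thesis using c0 by simp
    qed
  qed
  then have "(SUP n. emeasure M (A n)) \<le> c" by (intro SUP_least)
  moreover have "range A \<subseteq> sets M" unfolding A_def by auto
  ultimately have "emeasure M {0<..<a} \<le> c" using SUP_emeasure_incseq[OF _ inc, of M] U by simp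
  moreover note c0
  ultimately show ?thesis by (simp add: emeasure_eq_measure ennreal_le_iff)
qed


lemma int_ind_le:
  assumes "A \<in> sets borel" "A \<subseteq> {a0..}" "0 \<le> t" "0 \<le> a0"
  shows "(\<integral>l. indicator A l * exp (- t * l) \<partial>M) \<le> exp (- t * a0) * measure M A"
proof -
  interpret finite_measure M by (rule M_finite)
  have "(\<integral>l. indicator A l * exp (- t * l) \<partial>M) \<le> (\<integral>l. exp (- t * a0) * indicator A l \<partial>M)"
  proof (rule integral_mono)
    show "integrable M (\<lambda>l. indicator A l * exp (- t * l))"
      using assms by (intro int_exp) auto
    show "integrable M (\<lambda>l. exp (- t * a0) * indicator A l)"
      using assms by (intro integrable_mult_right integrable_real_indicator) (auto simp: less_top[symmetric])
    fix x show "indicator A x * exp (- t * x) \<le> exp (- t * a0) * indicator A x"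
      using assms by (auto simp: indicator_def mult_left_mono)
  qed
  also have "\<dots> = exp (- t * a0) * measure M A" using assms by simp
  finally show ?thesis .
qed

lemma low_int_le:
  assumes "0 < a" "\<And>l. 0 < l \<Longrightarrow> l < a \<Longrightarrow> V l \<le> c" "0 \<le> t"
  shows "(\<integral>l. indicator {0<..<a} l * exp (- t * l) \<partial>M) \<le> c"
proof -
  have "(\<integral>l. indicator {0<..<a} l * exp (- t * l) \<partial>M) \<le> exp (- t * 0) * measure M {0<..<a}"
    using assms by (intro int_ind_le) auto
  also have "\<dots> \<le> c" using meas_Ioo_le[OF assms(1,2)] by simp
  finally show ?thesis .
qed

lemma LV_nonneg: "0 \<le> LV V t"
  unfolding LV_eq by (intro integral_nonneg_AE) (auto simp: indicator_def)

lemma LV_anti: assumes "0 \<le> t" "t \<le> t'" shows "LV V t' \<le> LV V t"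
  unfolding LV_eq
proof (rule integral_mono)
  show "integrable M (\<lambda>l. indicator {0<..} l * exp (- t' * l))"
    using assms by (intro int_exp) auto
  show "integrable M (\<lambda>l. indicator {0<..} l * exp (- t * l))"
    using assms by (intro int_exp) auto
  fix x show "indicator {0<..} x * exp (- t' * x) \<le> indicator {0<..} x * exp (- t * x)"
    using assms by (auto simp: indicator_def mult_right_mono)
qed

lemma LV0_le: "LV V 0 \<le> LimV"
proof -
  interpret finite_measure M by (rule M_finite)
  have "LV V 0 = measure M {0<..}" unfolding LV_eq by simp
  also have "\<dots> \<le> measure M (space M)" by (rule bounded_measure)
  also have "\<dots> = LimV" using M_UNIV LimV_nonneg by (simp add: measure_def)
  finally show ?thesis .
qed

lemma LV_lower:
  assumes "0 < l" "0 \<le> t"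
  shows "exp (- t * l) * V l \<le> LV V t"
proof -
  have "exp (- t * l) * V l = (\<integral>x. exp (- t * l) * indicator {0<..l} x \<partial>M)"
    using M_Ioc[of 0 l] assms by (simp add: Vext_def)
  also have "\<dots> \<le> LV V t" unfolding LV_eq
  proof (rule integral_mono)
    show "integrable M (\<lambda>x. exp (- t * l) * indicator {0<..l} x)"
      using finite_measure.emeasure_finite[OF M_finite]
      by (intro integrable_mult_right integrable_real_indicator) (auto simp: less_top[symmetric])
    show "integrable M (\<lambda>l. indicator {0<..} l * exp (- t * l))"
      using assms by (intro int_exp) auto
    fix x show "exp (- t * l) * indicator {0<..l} x \<le> indicator {0<..} x * exp (- t * x)"
      using assms by (auto simp: indicator_def mult_left_mono)
  qed
  finally show ?thesis .
qed


lemma LV_cont: "continuous_on {0..} (LV V)"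
proof (rule continuous_on_sequentiallyI)
  fix u :: "nat \<Rightarrow> real" and a assume u: "\<forall>n. u n \<in> {0..}" "a \<in> {0..}" "u \<longlonglongrightarrow> a"
  show "(\<lambda>n. LV V (u n)) \<longlonglongrightarrow> LV V a"
    unfolding LV_eq
  proof (rule integral_dominated_convergence[where w="indicator {0<..}"])
    show "(\<lambda>l. indicator {0<..} l * exp (- a * l)) \<in> borel_measurable M" by measurable
    show "\<And>i. (\<lambda>l. indicator {0<..} l * exp (- u i * l)) \<in> borel_measurable M" by measurable
    show "integrable M (indicator {0<..} :: real \<Rightarrow> real)"
      using finite_measure.emeasure_finite[OF M_finite]
      by (intro integrable_real_indicator) (auto simp: less_top[symmetric])
    show "AE x in M. (\<lambda>i. indicator {0<..} x * exp (- u i * x)) \<longlonglongrightarrow> indicator {0<..} x * exp (- a * x)"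
      using u(3) by (intro AE_I2 tendsto_intros) auto
    show "\<And>i. AE x in M. norm (indicator {0<..} x * exp (- u i * x)) \<le> (indicator {0<..} x :: real)"
      using u(1) by (intro AE_I2) (auto simp: indicator_def)
  qed
qed

lemma LV_top: "(LV V \<longlongrightarrow> 0) at_top"
proof -
  have "((\<lambda>t. \<integral>l. indicator {0<..} l * exp (- t * l) \<partial>M) \<longlongrightarrow> (\<integral>l. 0 \<partial>M)) at_top"
  proof (rule integral_dominated_convergence_at_top[where w="indicator {0<..}"])
    show "(\<lambda>l. 0::real) \<in> borel_measurable M" by measurable
    show "\<And>i. (\<lambda>l. indicator {0<..} l * exp (- i * l)) \<in> borel_measurable M" by measurable
    show "integrable M (indicator {0<..} :: real \<Rightarrow> real)"
      using finite_measure.emeasure_finite[OF M_finite]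
      by (intro integrable_real_indicator) (auto simp: less_top[symmetric])
    show "AE x in M. ((\<lambda>i. indicator {0<..} x * exp (- i * x)) \<longlongrightarrow> 0) at_top"
    proof (intro AE_I2)
      fix x :: real
      show "((\<lambda>i. indicator {0<..} x * exp (- i * x)) \<longlongrightarrow> 0) at_top"
      proof (cases "x > 0")
        case True
        have "((\<lambda>i. exp (- i * x)) \<longlongrightarrow> 0) at_top"
          using True by real_asymp
        then show ?thesis using True by simp
      qed simp
    qed
    show "\<forall>\<^sub>F i in at_top. AE x in M. norm (indicator {0<..} x * exp (- i * x)) \<le> (indicator {0<..} x :: real)"
      unfolding eventually_at_top_linorder
      by (intro exI[of _ 0] allI impI AE_I2) (auto simp: indicator_def)
  qed
  then show ?thesis unfolding LV_eq[abs_def] by simp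
qed


lemma exp_tail_nn:
  assumes "0 < t" and that: "0 \<le> k"
  shows "(\<integral>\<^sup>+u. ennreal (k * t * exp (- t * u)) * indicator {l..} u \<partial>lborel) = ennreal (k * exp (- t * l))"
proof -
  have "(\<integral>\<^sup>+u. ennreal (k * t * exp (- t * u)) * indicator {l..} u \<partial>lborel) = 0 - (- k * exp (- t * l))"
  proof (rule nn_integral_FTC_atLeast)
    show "(\<lambda>u. k * t * exp (- t * u)) \<in> borel_measurable borel" by measurable
    fix x show "((\<lambda>u. - k * exp (- t * u)) has_real_derivative k * t * exp (- t * x)) (at x)"
      by (auto intro!: derivative_eq_intros)
    show "0 \<le> k * t * exp (- t * x)" using assms that by simp
  next
    show "((\<lambda>u. - k * exp (- t * u)) \<longlongrightarrow> 0) at_top"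
      using assms by real_asymp
  qed
  then show ?thesis by simp
qed

lemma tail_bound:
  assumes "0 < a" "0 < s" "0 \<le> \<tau>" "\<And>u. a \<le> u \<Longrightarrow> V u \<le> exp (\<tau> * u)"
  shows "(\<integral>l. indicator {a..} l * exp (- (\<tau> + s) * l) \<partial>M) \<le> (\<tau> + s) / (s * exp (s * a))"
proof -
  interpret finite_measure M by (rule M_finite)
  interpret P: pair_sigma_finite M "lborel :: real measure"
    by (simp add: pair_sigma_finite.intro sigma_finite_measure_axioms lborel.sigma_finite_measure_axioms)
  define t where "t = \<tau> + s"
  have t0: "0 < t" using assms unfolding t_def by simp
  define G where "G l u = (if a \<le> l \<and> l \<le> u then t * exp (- t * u) else 0)" for l u :: real
  have "ennreal (\<integral>l. indicator {a..} l * exp (- t * l) \<partial>M) = (\<integral>\<^sup>+l. ennreal (indicator {a..} l * exp (- t * l)) \<partial>M)"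
    using assms t0 by (intro nn_integral_eq_integral[symmetric] int_exp AE_I2) auto
  also have "\<dots> = (\<integral>\<^sup>+l. (\<integral>\<^sup>+u. ennreal (G l u) \<partial>lborel) \<partial>M)"
  proof (intro nn_integral_cong)
    fix l :: real
    show "ennreal (indicator {a..} l * exp (- t * l)) = (\<integral>\<^sup>+u. ennreal (G l u) \<partial>lborel)"
    proof (cases "a \<le> l")
      case True
      have "(\<integral>\<^sup>+u. ennreal (G l u) \<partial>lborel) = (\<integral>\<^sup>+u. ennreal (1 * t * exp (- t * u)) * indicator {l..} u \<partial>lborel)"
        using True by (intro nn_integral_cong) (auto simp: G_def indicator_def)
      also have "\<dots> = ennreal (1 * exp (- t * l))" by (rule exp_tail_nn[OF t0]) simp
      finally show ?thesis using True by simp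
    next
      case False
      then show ?thesis by (simp add: G_def)
    qed
  qed
  also have "\<dots> = (\<integral>\<^sup>+u. (\<integral>\<^sup>+l. ennreal (G l u) \<partial>M) \<partial>lborel)"
  proof (rule P.Fubini'[symmetric])
    show "case_prod (\<lambda>l u. ennreal (G l u)) \<in> borel_measurable (M \<Otimes>\<^sub>M lborel)"
      unfolding G_def by measurable
  qed
  also have "\<dots> \<le> (\<integral>\<^sup>+u. ennreal (1 * t * exp (- s * u)) * indicator {a..} u \<partial>lborel)"
  proof (intro nn_integral_mono)
    fix u :: real
    have "(\<integral>\<^sup>+l. ennreal (G l u) \<partial>M) = (\<integral>\<^sup>+l. ennreal (t * exp (- t * u)) * indicator {a..u} l \<partial>M)"
      by (intro nn_integral_cong) (auto simp: G_def indicator_def)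
    also have "\<dots> = ennreal (t * exp (- t * u)) * emeasure M {a..u}"
      by (rule nn_integral_cmult_indicator) simp
    also have "\<dots> \<le> ennreal (1 * t * exp (- s * u)) * indicator {a..} u"
    proof (cases "a \<le> u")
      case True
      have "emeasure M {a..u} \<le> emeasure M {..u}" by (intro emeasure_mono) auto
      also have "\<dots> = V u" using M_Iic(2)[of u] True assms(1) by (simp add: Vext_def)
      also have "\<dots> \<le> exp (\<tau> * u)" using assms(4)[OF True] by (simp add: ennreal_leI)
      finally have "ennreal (t * exp (- t * u)) * emeasure M {a..u} \<le> ennreal (t * exp (- t * u)) * ennreal (exp (\<tau> * u))"
        by (intro mult_left_mono) auto
      also have "\<dots> = ennreal (t * exp (- t * u) * exp (\<tau> * u))"
        using t0 by (simp add: ennreal_mult)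
      also have "t * exp (- t * u) * exp (\<tau> * u) = 1 * t * exp (- s * u)"
      proof -
        have "- t * u + \<tau> * u = - s * u" unfolding t_def by (simp add: algebra_simps)
        then have "exp (- t * u) * exp (\<tau> * u) = exp (- s * u)" by (metis exp_add)
        then show ?thesis by simp
      qed
      finally show ?thesis using True by simp
    next
      case False then show ?thesis by simp
    qed
    finally show "(\<integral>\<^sup>+l. ennreal (G l u) \<partial>M) \<le> ennreal (1 * t * exp (- s * u)) * indicator {a..} u" .
  qed
  also have "\<dots> = (\<integral>\<^sup>+u. ennreal ((t / s) * s * exp (- s * u)) * indicator {a..} u \<partial>lborel)"
    using assms(2) by simp
  also have "\<dots> = ennreal ((t / s) * exp (- s * a))"
    using assms(2) t0 by (intro exp_tail_nn) auto
  finally have "(\<integral>l. indicator {a..} l * exp (- t * l) \<partial>M) \<le> (t / s) * exp (- s * a)"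
    using assms(2) t0 by (simp add: ennreal_le_iff)
  also have "\<dots> = t / (s * exp (s * a))" by (simp add: exp_minus field_simps)
  finally show ?thesis unfolding t_def .
qed


lemma lam_props:
  assumes c0: "0 < c" and cL: "c < LimV"
  shows "0 < lamV V c" "\<And>l. 0 < l \<Longrightarrow> l < lamV V c \<Longrightarrow> V l \<le> c"
    "\<And>l. lamV V c < l \<Longrightarrow> c < V l" "c \<le> V (lamV V c)"
proof -
  define S where "S = {l. l > 0 \<and> V l > c}"
  have lamS: "lamV V c = Inf S" unfolding S_def lamV_def by simp
  have "\<forall>\<^sub>F y in at_top. c < V y" using order_tendstoD(1)[OF V_lim cL] .
  then obtain y0 where y0: "\<And>y. y \<ge> y0 \<Longrightarrow> c < V y" unfolding eventually_at_top_linorder by auto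
  have "max y0 1 \<in> S" unfolding S_def using y0[of "max y0 1"] by auto
  then have Sne: "S \<noteq> {}" by auto
  have bdd: "bdd_below S" unfolding S_def by (auto intro!: bdd_belowI[of _ 0])
  have lim0: "(V \<longlongrightarrow> 0) (at_right 0)" using VC unfolding Vclass_def by auto
  have "\<forall>\<^sub>F y in at_right 0. V y < c" using order_tendstoD(2)[OF lim0 c0] .
  then obtain d where d: "d > 0" "\<And>y. 0 < y \<Longrightarrow> y < d \<Longrightarrow> V y < c"
    unfolding eventually_at_right_field by auto
  have "d \<le> Inf S"
  proof (rule cInf_greatest[OF Sne])
    fix x assume "x \<in> S" then show "d \<le> x" using d unfolding S_def by force
  qed
  then show lpos: "0 < lamV V c" using d lamS by simp
  show below: "V l \<le> c" if "0 < l" "l < lamV V c" for l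
  proof (rule ccontr)
    assume "\<not> V l \<le> c"
    then have "l \<in> S" using that unfolding S_def by auto
    then have "Inf S \<le> l" using cInf_lower[OF _ bdd] by auto
    then show False using that lamS by simp
  qed
  show above: "c < V l" if "lamV V c < l" for l
  proof -
    have "Inf S < l" using that lamS by simp
    then obtain x where "x \<in> S" "x < l" using cInf_less_iff[OF Sne bdd] by auto
    then show ?thesis unfolding S_def using V_mono[of x l] by auto
  qed
  have rc: "continuous (at_right (lamV V c)) V" using VC lpos unfolding Vclass_def by auto
  then have "(V \<longlongrightarrow> V (lamV V c)) (at_right (lamV V c))" by (simp add: continuous_within)
  moreover have "\<forall>\<^sub>F y in at_right (lamV V c). c \<le> V y"
    unfolding eventually_at_right_field
    by (intro exI[of _ "lamV V c + 1"]) (auto intro: less_imp_le above)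
  ultimately show "c \<le> V (lamV V c)"
    by (rule tendsto_lowerbound) simp
qed

lemma lam_mono:
  assumes "0 < c1" "c1 < c2" "c2 < LimV"
  shows "lamV V c1 \<le> lamV V c2"
proof (rule ccontr)
  assume "\<not> ?thesis"
  then have lt: "lamV V c2 < lamV V c1" by simp
  define l where "l = (lamV V c2 + lamV V c1) / 2"
  have "0 < lamV V c2" using lam_props(1)[of c2] assms by simp
  then have "0 < l" "l < lamV V c1" "lamV V c2 < l" using lt unfolding l_def by auto
  then have "V l \<le> c1" "c2 < V l"
    using lam_props(2)[of c1 l] lam_props(3)[of c2 l] assms by auto
  then show False using assms by simp
qed


lemma tau_props:
  assumes c0: "0 < c" and cL: "c < LimV"
  shows "0 < tauV V c" "\<And>u. lamV V c \<le> u \<Longrightarrow> V u \<le> exp (tauV V c * u)"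
    "c / (1 + c) \<le> LV V (tauV V c)"
proof -
  define l0 where "l0 = lamV V c"
  define A where "A = {l. l > 0 \<and> l \<ge> l0}"
  define g where "g l = ln (1 + V l) / l" for l
  have l0: "0 < l0" using lam_props(1)[OF c0 cL] l0_def by simp
  have Vl0: "c \<le> V l0" using lam_props(4)[OF c0 cL] l0_def by simp
  have tau: "tauV V c = Sup (g ` A)" unfolding tauV_def A_def g_def l0_def by simp
  have l0A: "l0 \<in> A" using l0 unfolding A_def by simp
  have LimV0: "0 < LimV" using c0 cL by simp
  define K where "K = ln (1 + LimV)"
  have K0: "0 < K" unfolding K_def using LimV0 by simp
  have gK: "g l \<le> K / l" if "l > 0" for l
  proof -
    have "ln (1 + V l) \<le> K" unfolding K_def using V_le_Lim[OF that] V_nonneg[OF that] by simp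
    then show ?thesis unfolding g_def using that by (simp add: divide_right_mono)
  qed
  have bdd: "bdd_above (g ` A)"
  proof (rule bdd_aboveI2)
    fix l assume "l \<in> A"
    then have "l > 0" "l \<ge> l0" unfolding A_def by auto
    then have "K / l \<le> K / l0" using K0 l0 by (intro divide_left_mono) auto
    then show "g l \<le> K / l0" using gK[OF \<open>l>0\<close>] by simp
  qed
  have gle: "g l \<le> tauV V c" if "l \<in> A" for l
    unfolding tau using cSUP_upper[OF that bdd] .
  have "0 < g l0" unfolding g_def using l0 Vl0 c0 by simp
  then show tpos: "0 < tauV V c" using gle[OF l0A] by simp
  show Vexp: "V u \<le> exp (tauV V c * u)" if "lamV V c \<le> u" for u
  proof -
    have uA: "u \<in> A" "u > 0" using that l0 unfolding A_def l0_def by auto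
    have "ln (1 + V u) \<le> tauV V c * u"
      using gle[OF uA(1)] uA(2) unfolding g_def by (simp add: divide_le_eq mult.commute)
    moreover have "1 + V u = exp (ln (1 + V u))"
      using V_nonneg[OF uA(2)] by simp
    ultimately have "1 + V u \<le> exp (tauV V c * u)"
      by (metis exp_le_cancel_iff)
    then show ?thesis by simp
  qed
  define \<tau> where "\<tau> = tauV V c"
  define B where "B = 2 * K / \<tau>"
  have ev: "\<forall>\<^sub>F \<eta> in at_right 0. exp (- \<eta> * B) * (c / (1 + c)) \<le> LV V \<tau>"
    unfolding eventually_at_right_field
  proof (intro exI[of _ "\<tau> / 2"] conjI allI impI)
    show "0 < \<tau> / 2" using tpos \<tau>_def by simp
    fix \<eta> :: real assume \<eta>: "0 < \<eta>" "\<eta> < \<tau> / 2"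
    have "\<tau> - \<eta> < Sup (g ` A)" using \<eta> tau \<tau>_def by simp
    then obtain l where lA: "l \<in> A" and gl: "\<tau> - \<eta> < g l"
      using less_cSUP_iff[of A g "\<tau> - \<eta>"] l0A bdd by auto
    have lpos: "0 < l" and ll0: "l0 \<le> l" using lA unfolding A_def by auto
    have Vl: "c \<le> V l" using Vl0 V_mono[OF l0 ll0] by simp
    have "\<tau> / 2 < K / l" using gl gK[OF lpos] \<eta> by linarith
    then have lB: "l < B" unfolding B_def using lpos tpos \<tau>_def K0 by (simp add: field_simps)
    have "\<tau> * l - \<eta> * l < ln (1 + V l)"
      using gl lpos unfolding g_def by (simp add: field_simps)
    moreover have "1 + V l = exp (ln (1 + V l))"
      using V_nonneg[OF lpos] by simp
    ultimately have "exp (\<tau> * l - \<eta> * l) < 1 + V l"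
      by (metis exp_less_cancel_iff)
    then have "exp (- \<eta> * l) < (1 + V l) * exp (- \<tau> * l)"
      by (simp add: exp_diff field_simps exp_minus)
    then have "exp (- \<eta> * l) * V l \<le> (1 + V l) * exp (- \<tau> * l) * V l"
      using V_nonneg[OF lpos] by (intro mult_right_mono) auto
    then have h1: "exp (- \<eta> * l) * (V l / (1 + V l)) \<le> exp (- \<tau> * l) * V l"
      using V_nonneg[OF lpos] by (simp add: field_simps)
    have h2: "exp (- \<eta> * B) \<le> exp (- \<eta> * l)" using lB \<eta> by simp
    have h3: "c / (1 + c) \<le> V l / (1 + V l)"
      using Vl c0 by (simp add: field_simps)
    have h4: "exp (- \<tau> * l) * V l \<le> LV V \<tau>"
      using LV_lower[OF lpos] tpos \<tau>_def by simp
    show "exp (- \<eta> * B) * (c / (1 + c)) \<le> LV V \<tau>"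
    proof -
      have "exp (- \<eta> * B) * (c / (1 + c)) \<le> exp (- \<eta> * l) * (V l / (1 + V l))"
        using h2 h3 c0 by (intro mult_mono) auto
      then show ?thesis using h1 h4 by linarith
    qed
  qed
  have lim: "((\<lambda>\<eta>. exp (- \<eta> * B) * (c / (1 + c))) \<longlongrightarrow> exp (- 0 * B) * (c / (1 + c))) (at_right 0)"
    by (intro tendsto_intros)
  show "c / (1 + c) \<le> LV V (tauV V c)"
    using tendsto_upperbound[OF lim ev] \<tau>_def by simp
qed


lemma T_props:
  assumes e0: "0 < \<epsilon>" and eL: "\<epsilon> < LV V 0"
  shows "0 \<le> TV V \<epsilon>" "LV V (TV V \<epsilon>) = \<epsilon>"
proof -
  define P where "P = {t. 0 \<le> t \<and> LV V t \<le> \<epsilon>}"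
  have "\<forall>\<^sub>F t in at_top. LV V t < \<epsilon>" using order_tendstoD(2)[OF LV_top e0] .
  then obtain t1 where t1: "\<And>t. t \<ge> t1 \<Longrightarrow> LV V t < \<epsilon>" unfolding eventually_at_top_linorder by auto
  have "max t1 0 \<in> P" unfolding P_def using t1[of "max t1 0"] by auto
  then have Pne: "P \<noteq> {}" by auto
  have bdd: "bdd_below P" unfolding P_def by (auto intro!: bdd_belowI[of _ 0])
  define T0 where "T0 = Inf P"
  have T0nn: "0 \<le> T0" unfolding T0_def by (rule cInf_greatest[OF Pne]) (auto simp: P_def)
  have lower: "T0 \<le> t" if "t \<in> P" for t unfolding T0_def by (rule cInf_lower[OF that bdd])
  have cont: "\<forall>e>0. \<exists>d>0. \<forall>x'\<in>{0..}. dist x' T0 < d \<longrightarrow> dist (LV V x') (LV V T0) < e"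
    using LV_cont[unfolded continuous_on_iff] T0nn by simp
  have LT0: "LV V T0 \<le> \<epsilon>"
  proof (rule ccontr)
    assume "\<not> ?thesis"
    then have "0 < LV V T0 - \<epsilon>" by simp
    then obtain d where d: "d > 0" "\<And>x'. x' \<in> {0..} \<Longrightarrow> dist x' T0 < d \<Longrightarrow> dist (LV V x') (LV V T0) < LV V T0 - \<epsilon>"
      using cont[rule_format, OF \<open>0 < LV V T0 - \<epsilon>\<close>] by blast
    have "Inf P < T0 + d" using d T0_def by simp
    then obtain t where t: "t \<in> P" "t < T0 + d" using cInf_less_iff[OF Pne bdd] by auto
    have "T0 \<le> t" using lower[OF t(1)] .
    then have "dist (LV V t) (LV V T0) < LV V T0 - \<epsilon>" using d(2)[of t] t T0nn by (simp add: dist_real_def)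
    then show False using t(1) unfolding P_def dist_real_def by auto
  qed
  have T0P: "T0 \<in> P" unfolding P_def using T0nn LT0 by simp
  have TV: "TV V \<epsilon> = T0" unfolding TV_def
    by (rule Least_equality) (use T0P lower in \<open>auto simp: P_def\<close>)
  show "0 \<le> TV V \<epsilon>" using TV T0nn by simp
  have "\<epsilon> \<le> LV V T0"
  proof (rule ccontr)
    assume "\<not> ?thesis"
    then have lt: "0 < \<epsilon> - LV V T0" by simp
    have "T0 \<noteq> 0" using lt eL by auto
    then have T0pos: "0 < T0" using T0nn by simp
    obtain d where d: "d > 0" "\<And>x'. x' \<in> {0..} \<Longrightarrow> dist x' T0 < d \<Longrightarrow> dist (LV V x') (LV V T0) < \<epsilon> - LV V T0"
      using cont[rule_format, OF lt] by blast
    define t where "t = max 0 (T0 - d / 2)"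
    have "t \<in> {0..}" "dist t T0 < d" using d T0pos unfolding t_def by (auto simp: dist_real_def)
    then have "dist (LV V t) (LV V T0) < \<epsilon> - LV V T0" using d(2) by blast
    then have "t \<in> P" unfolding P_def t_def by (auto simp: dist_real_def)
    moreover have "t < T0" using d T0pos unfolding t_def by auto
    ultimately show False using lower[of t] by simp
  qed
  then show "LV V (TV V \<epsilon>) = \<epsilon>" using TV LT0 by simp
qed


end

theorem lemma2p5:
  fixes V :: "real \<Rightarrow> real" and \<epsilon> c c1 c2 :: real
  assumes "Vclass V"
    and "\<epsilon> \<in> {0<..<LV V 0}" and "c \<in> {0<..<LV V 0}"
    and "c1 \<in> {0<..<LV V 0}" and "c2 \<in> {0<..<LV V 0}"
  shows "LV V (tauV V c) \<ge> c / (1 + c)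
     \<and> (\<forall>s>0. LV V (tauV V c + s)
           \<le> c + (tauV V c + s) / (s * exp (s * lamV V c)))
     \<and> LV V (TV V \<epsilon>) = \<epsilon>
     \<and> (\<forall>r\<ge>0. \<forall>s>0. c1 < c2 \<longrightarrow>
          LV V (TV V \<epsilon> + r + s)
           \<le> c1 + c2 * exp (- (TV V \<epsilon> + r + s) * lamV V c1)
              + \<epsilon> * (TV V \<epsilon> + r + s) / ((TV V \<epsilon> + s) * exp (r * lamV V c2)))"
proof -
  have VC: "Vclass V" by (rule assms(1))
  have L0: "LV V 0 \<le> LimV V" by (rule LV0_le[OF VC])
  have c0: "0 < c" and cL: "c < LimV V" using assms(3) L0 by auto
  have c10: "0 < c1" and c1L: "c1 < LimV V" using assms(4) L0 by auto
  have c20: "0 < c2" and c2L: "c2 < LimV V" using assms(5) L0 by auto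
  have e0: "0 < \<epsilon>" and eL: "\<epsilon> < LV V 0" using assms(2) by auto
  have P1: "LV V (tauV V c) \<ge> c / (1 + c)" using tau_props(3)[OF VC c0 cL] by simp
  have P2: "LV V (tauV V c + s) \<le> c + (tauV V c + s) / (s * exp (s * lamV V c))" if s: "s > 0" for s
  proof -
    have l0: "0 < lamV V c" by (rule lam_props(1)[OF VC c0 cL])
    have t0: "0 < tauV V c" by (rule tau_props(1)[OF VC c0 cL])
    have "LV V (tauV V c + s) = (\<integral>l. indicator {0<..<lamV V c} l * exp (- (tauV V c + s) * l) \<partial>interval_measure (Vext V))
       + (\<integral>l. indicator {lamV V c..} l * exp (- (tauV V c + s) * l) \<partial>interval_measure (Vext V))"
      using LV_split[OF VC l0, of "tauV V c + s"] t0 s by simp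
    also have "\<dots> \<le> c + (tauV V c + s) / (s * exp (s * lamV V c))"
    proof (rule add_mono)
      show "(\<integral>l. indicator {0<..<lamV V c} l * exp (- (tauV V c + s) * l) \<partial>interval_measure (Vext V)) \<le> c"
        by (rule low_int_le[OF VC l0 lam_props(2)[OF VC c0 cL]]) (use t0 s in simp_all)
      show "(\<integral>l. indicator {lamV V c..} l * exp (- (tauV V c + s) * l) \<partial>interval_measure (Vext V))
          \<le> (tauV V c + s) / (s * exp (s * lamV V c))"
        using tail_bound[OF VC l0 s _ tau_props(2)[OF VC c0 cL]] t0 by simp
    qed
    finally show ?thesis .
  qed
  have T0: "0 \<le> TV V \<epsilon>" and P3: "LV V (TV V \<epsilon>) = \<epsilon>" using T_props[OF VC e0 eL] by auto
  have P4: "LV V (TV V \<epsilon> + r + s)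
           \<le> c1 + c2 * exp (- (TV V \<epsilon> + r + s) * lamV V c1)
              + \<epsilon> * (TV V \<epsilon> + r + s) / ((TV V \<epsilon> + s) * exp (r * lamV V c2))"
    if r: "r \<ge> 0" and s: "s > 0" and c12: "c1 < c2" for r s
  proof -
    let ?M = "interval_measure (Vext V)"
    define T where "T = TV V \<epsilon>"
    define t where "t = T + r + s"
    define l1 where "l1 = lamV V c1"
    define l2 where "l2 = lamV V c2"
    have l1: "0 < l1" unfolding l1_def by (rule lam_props(1)[OF VC c10 c1L])
    have l12: "l1 \<le> l2" unfolding l1_def l2_def by (rule lam_mono[OF VC c10 c12 c2L])
    have l2: "0 < l2" using l1 l12 by simp
    have T0': "0 \<le> T" using T0 T_def by simp
    have t0: "0 < t" using T0' r s unfolding t_def by simp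
    have "LV V t = (\<integral>l. indicator {0<..<l1} l * exp (- t * l) \<partial>?M)
       + (\<integral>l. indicator {l1..} l * exp (- t * l) \<partial>?M)"
      using LV_split[OF VC l1, of t] t0 by simp
    also have "(\<integral>l. indicator {l1..} l * exp (- t * l) \<partial>?M)
       = (\<integral>l. indicator {l1..<l2} l * exp (- t * l) + indicator {l2..} l * exp (- t * l) \<partial>?M)"
      using l12 by (intro Bochner_Integration.integral_cong) (auto simp: indicator_def)
    also have "\<dots> = (\<integral>l. indicator {l1..<l2} l * exp (- t * l) \<partial>?M) + (\<integral>l. indicator {l2..} l * exp (- t * l) \<partial>?M)"
      using l1 l2 t0 by (intro Bochner_Integration.integral_add int_exp[OF VC]) auto
    finally have split: "LV V t = (\<integral>l. indicator {0<..<l1} l * exp (- t * l) \<partial>?M)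
       + (\<integral>l. indicator {l1..<l2} l * exp (- t * l) \<partial>?M) + (\<integral>l. indicator {l2..} l * exp (- t * l) \<partial>?M)"
      by simp
    have I1: "(\<integral>l. indicator {0<..<l1} l * exp (- t * l) \<partial>?M) \<le> c1"
      using low_int_le[OF VC l1 lam_props(2)[OF VC c10 c1L]] t0 l1_def by simp
    have "(\<integral>l. indicator {l1..<l2} l * exp (- t * l) \<partial>?M) \<le> exp (- t * l1) * measure ?M {l1..<l2}"
      using l1 t0 by (intro int_ind_le[OF VC]) auto
    also have "\<dots> \<le> exp (- t * l1) * c2"
    proof (rule mult_left_mono)
      interpret finite_measure ?M by (rule M_finite[OF VC])
      have "measure ?M {l1..<l2} \<le> measure ?M {0<..<l2}"
        using l1 by (intro finite_measure_mono) auto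
      also have "\<dots> \<le> c2" using meas_Ioo_le[OF VC l2 lam_props(2)[OF VC c20 c2L]] l2_def by simp
      finally show "measure ?M {l1..<l2} \<le> c2" .
    qed simp
    finally have I2: "(\<integral>l. indicator {l1..<l2} l * exp (- t * l) \<partial>?M) \<le> c2 * exp (- t * l1)"
      by (simp add: mult.commute)
    have "(\<integral>l. indicator {l2..} l * exp (- t * l) \<partial>?M)
        \<le> (\<integral>l. exp (- r * l2) * (indicator {0<..} l * exp (- (T + s) * l)) \<partial>?M)"
    proof (rule integral_mono)
      show "integrable ?M (\<lambda>l. indicator {l2..} l * exp (- t * l))"
        using l2 t0 by (intro int_exp[OF VC]) auto
      show "integrable ?M (\<lambda>l. exp (- r * l2) * (indicator {0<..} l * exp (- (T + s) * l)))"
        using T0' s by (intro integrable_mult_right int_exp[OF VC]) auto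
      fix x
      show "indicator {l2..} x * exp (- t * x) \<le> exp (- r * l2) * (indicator {0<..} x * exp (- (T + s) * x))"
      proof (cases "l2 \<le> x")
        case True
        have "exp (- t * x) = exp (- r * x) * exp (- (T + s) * x)"
          unfolding t_def by (simp add: exp_add[symmetric] algebra_simps)
        also have "\<dots> \<le> exp (- r * l2) * exp (- (T + s) * x)"
          using True r by (intro mult_right_mono) (auto simp: mult_left_mono)
        finally show ?thesis using True l2 by simp
      qed (simp)
    qed
    also have "\<dots> = exp (- r * l2) * LV V (T + s)"
      unfolding LV_eq[OF VC] by simp
    also have "\<dots> \<le> exp (- r * l2) * \<epsilon>"
      using LV_anti[OF VC T0', of "T + s"] s P3 T_def by (intro mult_left_mono) auto
    also have "\<dots> \<le> \<epsilon> * t / ((T + s) * exp (r * l2))"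
    proof -
      have Ts: "T + s \<noteq> 0" using T0' s by simp
      have "exp (- r * l2) * \<epsilon> = \<epsilon> / exp (r * l2)"
        by (simp add: exp_minus field_simps)
      also have "\<dots> = \<epsilon> * (T + s) / ((T + s) * exp (r * l2))"
        using Ts by simp
      finally have "exp (- r * l2) * \<epsilon> = \<epsilon> * (T + s) / ((T + s) * exp (r * l2))" .
      also have "\<dots> \<le> \<epsilon> * t / ((T + s) * exp (r * l2))"
        using T0' s r e0 unfolding t_def by (intro divide_right_mono mult_left_mono) auto
      finally show ?thesis .
    qed
    finally have I3: "(\<integral>l. indicator {l2..} l * exp (- t * l) \<partial>?M) \<le> \<epsilon> * t / ((T + s) * exp (r * l2))" .
    have "LV V t \<le> c1 + c2 * exp (- t * l1) + \<epsilon> * t / ((T + s) * exp (r * l2))"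
      using split I1 I2 I3 by linarith
    then show ?thesis unfolding t_def T_def l1_def l2_def by simp
  qed
  show ?thesis using P1 P2 P3 P4 by blast
qed

end
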